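(* Let $I=[0,2\pi]$, $c:I^n\to\mathbb R\cup\{+\infty\}$ continuous, and $v\in\mathrm L^1(I)$ with $c(x)-\sum_{j=1}^nv(x_j)\ge0$ for Lebesgue-a.e. $x\in I^n$. Then for every $\gamma\in\mathcal P(I^n)$ whose sum of one-dimensional marginals $\rho_\gamma=\sum_{j=1}^n\pi_j^\#\gamma$ is (given by) a continuous function on $I$, $\int_{I^n}c\,d\gamma-\int_I\rho_\gamma(x)v(x)\,dx\ge0.$ In addition, if $\rho\in\mathcal D_{\rm per}$ and $v_0(\rho)\in\mathrm H^{-1}_{\rm per}(I)$ is a normalized generalized Kantorovich potential for $\rho$ (with respect to the cost $c$) such that $v\ge v_0(\rho)$ in $\mathrm H^{-1}_{\rm per}(I)$, then $v=v_0(\rho)$ in $\mathrm H^{-1}_{\rm per}(I)$.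
   Context: $\pi_j$ is the $j$-th coordinate projection. $\mathrm H^1_{\rm per}(I)$: periodic $\mathrm H^1$, $\mathrm H^{-1}_{\rm per}(I)$ its dual with pairing $\langle\cdot,\cdot\rangle$; $\mathrm L^1$ functions act on $\mathrm H^1_{\rm per}$ by integration. $u\ge v$ in $\mathrm H^{-1}_{\rm per}$ means $\langle u-v,\xi\rangle\ge0$ for all $0\le\xi\in\mathrm H^1_{\rm per}(I)$. $\mathcal D_{\rm per}=\{\rho\in\mathrm H^1_{\rm per}(I):\rho>0\text{ on }I,\int\rho=1\}$. $F_{\rm OT}(\xi)=\min\{\int c\,d\gamma:\gamma\in\mathcal P(I^n),\text{ all marginals }=\xi\}$. A generalized Kantorovich potential for $\rho$ is $v_0\in\mathrm H^{-1}_{\rm per}(I)$ with $F_{\rm OT}(\xi)-n\langle v_0,\xi\rangle\ge F_{\rm OT}(\rho)-n\langle v_0,\rho\rangle$ for all $\xi\in\mathcal P(I)$ with $\sqrt\xi\in\mathrm H^1_{\rm per}(I)$; it is normalized if $F_{\rm OT}(\rho)=n\langle v_0,\rho\rangle$. *)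

theory Defs
  imports "HOL-Probability.Probability"
begin

definition Iper :: "real set" where
  "Iper = {0 .. 2 * pi}"

definition Icube :: "(real ^ 'n) set" where
  "Icube = {x. \<forall>j. x $ j \<in> Iper}"

definition prob_on_cube :: "(real ^ 'n) measure \<Rightarrow> bool" where
  "prob_on_cube \<gamma> \<longleftrightarrow> prob_space \<gamma> \<and> space \<gamma> = Icube
      \<and> sets \<gamma> = sets (restrict_space borel Icube)"

definition ereal_integral :: "'a measure \<Rightarrow> ('a \<Rightarrow> ereal) \<Rightarrow> ereal" where
  "ereal_integral M f =
     enn2ereal (\<integral>\<^sup>+ x. e2ennreal (f x) \<partial>M) - enn2ereal (\<integral>\<^sup>+ x. e2ennreal (- f x) \<partial>M)"

text \<open>Periodic H^1 on I: xi is absolutely continuous on I with weak derivative g in L^2(I),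
  and xi(0) = xi(2 pi).\<close>
definition h1per_deriv :: "(real \<Rightarrow> real) \<Rightarrow> (real \<Rightarrow> real) \<Rightarrow> bool" where
  "h1per_deriv \<xi> g \<longleftrightarrow>
     set_integrable lborel Iper g \<and> set_integrable lborel Iper (\<lambda>x. (g x)\<^sup>2)
     \<and> (\<forall>x\<in>Iper. \<xi> x = \<xi> 0 + (LINT t:{0..x}|lborel. g t))
     \<and> \<xi> 0 = \<xi> (2 * pi)"

definition H1per :: "(real \<Rightarrow> real) \<Rightarrow> bool" where
  "H1per \<xi> \<longleftrightarrow> (\<exists>g. h1per_deriv \<xi> g)"

text \<open>H^{-1}_per: bounded linear functionals on H^1_per (w.r.t. the H^1 norm).\<close>
definition Hm1per :: "((real \<Rightarrow> real) \<Rightarrow> real) \<Rightarrow> bool" where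
  "Hm1per u \<longleftrightarrow>
     (\<forall>\<xi> \<eta> a b. H1per \<xi> \<longrightarrow> H1per \<eta> \<longrightarrow>
        u (\<lambda>x. a * \<xi> x + b * \<eta> x) = a * u \<xi> + b * u \<eta>)
     \<and> (\<exists>K. \<forall>\<xi> g. h1per_deriv \<xi> g \<longrightarrow>
        \<bar>u \<xi>\<bar> \<le> K * sqrt ((LINT x:Iper|lborel. (\<xi> x)\<^sup>2) + (LINT x:Iper|lborel. (g x)\<^sup>2)))"

definition L1_pair :: "(real \<Rightarrow> real) \<Rightarrow> (real \<Rightarrow> real) \<Rightarrow> real" where
  "L1_pair v \<xi> = (LINT x:Iper|lborel. v x * \<xi> x)"

definition Dper :: "(real \<Rightarrow> real) \<Rightarrow> bool" where
  "Dper \<rho> \<longleftrightarrow> H1per \<rho> \<and> (\<forall>x\<in>Iper. \<rho> x > 0) \<and> (LINT x:Iper|lborel. \<rho> x) = 1"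

definition has_marginals :: "(real ^ 'n) measure \<Rightarrow> (real \<Rightarrow> real) \<Rightarrow> bool" where
  "has_marginals \<gamma> \<xi> \<longleftrightarrow>
     (\<forall>j. distr \<gamma> borel (\<lambda>x. x $ j) = density lborel (\<lambda>t. ennreal (\<xi> t) * indicator Iper t))"

text \<open>Multi-marginal optimal transport functional (the minimum is written as an infimum).\<close>
definition F_OT :: "(real ^ 'n \<Rightarrow> ereal) \<Rightarrow> (real \<Rightarrow> real) \<Rightarrow> ereal" where
  "F_OT c \<xi> = Inf {ereal_integral \<gamma> c | \<gamma>. prob_on_cube \<gamma> \<and> has_marginals \<gamma> \<xi>}"

definition admissible_density :: "(real \<Rightarrow> real) \<Rightarrow> bool" where
  "admissible_density \<xi> \<longleftrightarrow> (\<forall>x\<in>Iper. \<xi> x \<ge> 0) \<and> set_integrable lborel Iper \<xi>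
     \<and> (LINT x:Iper|lborel. \<xi> x) = 1 \<and> H1per (\<lambda>x. sqrt (\<xi> x))"

definition gen_kantorovich_potential ::
  "(real ^ 'n \<Rightarrow> ereal) \<Rightarrow> (real \<Rightarrow> real) \<Rightarrow> ((real \<Rightarrow> real) \<Rightarrow> real) \<Rightarrow> bool" where
  "gen_kantorovich_potential c \<rho> v0 \<longleftrightarrow> Hm1per v0 \<and>
     (\<forall>\<xi>. admissible_density \<xi> \<longrightarrow>
        F_OT c \<xi> - ereal (real CARD('n) * v0 \<xi>) \<ge> F_OT c \<rho> - ereal (real CARD('n) * v0 \<rho>))"

definition normalized_gen_kantorovich_potential ::
  "(real ^ 'n \<Rightarrow> ereal) \<Rightarrow> (real \<Rightarrow> real) \<Rightarrow> ((real \<Rightarrow> real) \<Rightarrow> real) \<Rightarrow> bool" where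
  "normalized_gen_kantorovich_potential c \<rho> v0 \<longleftrightarrow>
     gen_kantorovich_potential c \<rho> v0 \<and> F_OT c \<rho> = ereal (real CARD('n) * v0 \<rho>)"

end

theory Submission
  imports Defs
begin


lemma Basis_vec_range: "(Basis :: (real^'n) set) = range (\<lambda>j. axis j 1)"
  by (auto simp: Basis_vec_def)

lemma bm_vec_nth[measurable]: "(\<lambda>y::real^'n. y$j) \<in> borel_measurable borel"
  by (intro borel_measurable_continuous_onI continuous_intros)

lemma prod_box_pos:
  fixes E :: "'n::finite \<Rightarrow> real set"
  assumes meas: "\<And>j. E j \<in> sets borel" and pos: "\<And>j. emeasure lborel (E j) \<noteq> 0"
  shows "emeasure (lborel :: (real^'n) measure) {y. \<forall>j. y$j \<in> E j} \<noteq> 0"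
proof -
  define F where "F b = E (SOME j. b = axis j (1::real))" for b :: "real^'n"
  have FE: "F (axis j 1) = E j" for j
  proof -
    have "(SOME i. axis j (1::real) = axis i 1) = j"
      by (rule some_equality) (auto simp: axis_eq_axis)
    then show ?thesis by (simp add: F_def)
  qed
  have ind: "indicator {y. \<forall>j. y$j \<in> E j} y = (\<Prod>b\<in>Basis. indicator (F b) (y \<bullet> b) :: ennreal)" for y :: "real^'n"
  proof -
    have "(\<Prod>b\<in>Basis. indicator (F b) (y \<bullet> b) :: ennreal) = (\<Prod>j\<in>UNIV. indicator (F (axis j 1)) (y \<bullet> axis j 1))"
      unfolding Basis_vec_range
      by (subst prod.reindex) (auto simp: inj_on_def axis_eq_axis)
    also have "\<dots> = (\<Prod>j\<in>UNIV. indicator (E j) (y $ j))"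
      by (simp add: FE inner_axis)
    also have "\<dots> = indicator {y. \<forall>j. y$j \<in> E j} y"
      by (auto simp: indicator_def prod_zero_iff)
    finally show ?thesis by simp
  qed
  have Fm: "F b \<in> sets borel" for b using meas by (simp add: F_def)
  have "emeasure (lborel :: (real^'n) measure) {y. \<forall>j. y$j \<in> E j}
      = (\<integral>\<^sup>+y. indicator {y. \<forall>j. y$j \<in> E j} y \<partial>lborel)"
  proof (rule nn_integral_indicator[symmetric])
    have "{y::real^'n. \<forall>j. y$j \<in> E j} = (\<Inter>j. (\<lambda>y. y$j) -` E j)" by auto
    also have "\<dots> \<in> sets borel"
      using measurable_sets[OF bm_vec_nth meas] by (intro sets.countable_INT) auto
    finally show "{y::real^'n. \<forall>j. y$j \<in> E j} \<in> sets lborel" by simp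
  qed
  also have "\<dots> = (\<integral>\<^sup>+y. (\<Prod>b\<in>Basis. indicator (F b) (y \<bullet> b)) \<partial>lborel)"
    by (simp add: ind)
  also have "\<dots> = (\<Prod>b\<in>Basis. (\<integral>\<^sup>+x. indicator (F b) x \<partial>lborel))"
    by (rule nn_integral_lborel_prod) (auto intro: Fm borel_measurable_indicator)
  also have "\<dots> = (\<Prod>b\<in>Basis. emeasure lborel (F b))"
    using Fm by (simp)
  also have "\<dots> \<noteq> 0"
    unfolding Basis_vec_range using pos FE by (auto simp: prod_zero_iff)
  finally show ?thesis .
qed



definition NN :: "(real \<Rightarrow> real) \<Rightarrow> real set" where
 "NN w = \<Union> ((\<lambda>(a,b,q). {t \<in> {a<..<b} \<inter> Iper. w t > q}) `
    {(a,b,q). a\<in>\<rat> \<and> b\<in>\<rat> \<and> q\<in>\<rat> \<and> emeasure lborel {t \<in> {a<..<b} \<inter> Iper. w t > q} = 0})"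

lemma Iper_borel[measurable]: "Iper \<in> sets borel"
  by (simp add: Iper_def)

lemma NN_null:
  assumes [measurable]: "w \<in> borel_measurable borel"
  shows "NN w \<in> null_sets lborel"
  unfolding NN_def
proof (rule null_sets_UN')
  have "{(a,b,q). a\<in>\<rat> \<and> b\<in>\<rat> \<and> q\<in>\<rat> \<and> emeasure lborel {t \<in> {a<..<b} \<inter> Iper. w t > q} = 0}
        \<subseteq> \<rat> \<times> \<rat> \<times> (\<rat>::real set)" by auto
  moreover have "countable (\<rat> \<times> \<rat> \<times> (\<rat>::real set))"
    by (intro countable_SIGMA countable_rat)
  ultimately show "countable {(a,b,q). a\<in>\<rat> \<and> b\<in>\<rat> \<and> q\<in>\<rat> \<and> emeasure lborel {t \<in> {a<..<b} \<inter> Iper. w t > q} = 0}"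
    by (rule countable_subset)
next
  fix i assume "i \<in> {(a,b,q). a\<in>\<rat> \<and> b\<in>\<rat> \<and> q\<in>\<rat> \<and> emeasure lborel {t \<in> {a<..<b} \<inter> Iper. w t > q} = 0}"
  then obtain a b q where i: "i = (a,b,q)" and z: "emeasure lborel {t \<in> {a<..<b} \<inter> Iper. w t > q} = 0"
    by auto
  have "{t \<in> {a<..<b} \<inter> Iper. w t > q} \<in> sets lborel" by measurable
  then show "(case i of (a, b, q) \<Rightarrow> {t \<in> {a<..<b} \<inter> Iper. q < w t}) \<in> null_sets lborel"
    using z i by (simp add: null_sets_def)
qed



lemma rat_between: "(x::real) < y \<Longrightarrow> \<exists>q. q \<in> \<rat> \<and> x < q \<and> q < y"
  using Rats_dense_in_real by blast

lemma pointwise: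
  fixes c :: "real ^ 'n \<Rightarrow> ereal" and w :: "real \<Rightarrow> real"
  assumes c_cont: "continuous_on Icube c"
    and c_not_minf: "\<forall>x\<in>Icube. c x \<noteq> -\<infinity>"
    and w_meas[measurable]: "w \<in> borel_measurable borel"
    and c_ge: "AE x in lborel. x \<in> Icube \<longrightarrow> c x \<ge> ereal (\<Sum>j\<in>UNIV. w (x $ j))"
    and x: "x \<in> Icube" "\<forall>j. x$j \<notin> NN w"
  shows "c x \<ge> ereal (\<Sum>j\<in>UNIV. w (x $ j))"
proof (rule ccontr)
  define s where "s = (\<Sum>j\<in>UNIV. w (x $ j))"
  assume "\<not> ?thesis"
  then have lt: "c x < ereal s" by (simp add: s_def not_le)
  then obtain r where r: "c x = ereal r" using c_not_minf x(1)
    by (cases "c x") auto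
  have rs: "r < s" using lt r by simp
  define n where "n = real CARD('n)"
  have n0: "n > 0" by (simp add: n_def)
  define \<delta> where "\<delta> = (s - r) / (2 * n)"
  have d0: "\<delta> > 0" using rs n0 by (simp add: \<delta>_def)
  have exq: "\<forall>j. \<exists>q. q \<in> \<rat> \<and> w (x$j) - \<delta> < q \<and> q < w (x$j)"
    using d0 by (intro allI rat_between) simp
  obtain q where "\<forall>j. q j \<in> \<rat> \<and> w (x$j) - \<delta> < q j \<and> q j < w (x$j)" using choice[OF exq] by blast
  then have q: "\<And>j. q j \<in> \<rat>" "\<And>j. w (x$j) - \<delta> < q j" "\<And>j. q j < w (x$j)" by auto
  define Q where "Q = (\<Sum>j\<in>UNIV. q j)"
  have "(\<Sum>j\<in>UNIV. w (x$j) - \<delta>) < Q"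
    unfolding Q_def by (rule sum_strict_mono) (auto intro: q)
  then have "s - n * \<delta> < Q" by (simp add: sum_subtractf s_def n_def)
  moreover have "n * \<delta> = (s - r) / 2" using n0 by (simp add: \<delta>_def)
  ultimately have "s - (s - r) / 2 < Q" by simp
  then have rQ: "r < Q" using rs by (simp add: field_simps)
  have "open {..< ereal Q}" by simp
  moreover have "c x \<in> {..< ereal Q}" using r rQ by simp
  ultimately have "\<exists>A. open A \<and> x \<in> A \<and> (\<forall>y\<in>Icube. y \<in> A \<longrightarrow> c y \<in> {..< ereal Q})"
    using c_cont x(1) unfolding continuous_on_topological by blast
  then obtain A where A: "open A" "x \<in> A" "\<And>y. y \<in> Icube \<Longrightarrow> y \<in> A \<Longrightarrow> c y < ereal Q"
    by auto
  then obtain e where e: "e > 0" "ball x e \<subseteq> A"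
    using open_contains_ball by blast
  define d where "d = e / n"
  have d: "d > 0" using e n0 by (simp add: d_def)
  have exa: "\<forall>j. \<exists>a. a \<in> \<rat> \<and> x$j - d < a \<and> a < x$j"
    using d by (intro allI rat_between) simp
  obtain a where "\<forall>j. a j \<in> \<rat> \<and> x$j - d < a j \<and> a j < x$j" using choice[OF exa] by blast
  then have a: "\<And>j. a j \<in> \<rat>" "\<And>j. x$j - d < a j" "\<And>j. a j < x$j" by auto
  have exb: "\<forall>j. \<exists>b. b \<in> \<rat> \<and> x$j < b \<and> b < x$j + d"
    using d by (intro allI rat_between) simp
  obtain b where "\<forall>j. b j \<in> \<rat> \<and> x$j < b j \<and> b j < x$j + d" using choice[OF exb] by blast
  then have b: "\<And>j. b j \<in> \<rat>" "\<And>j. x$j < b j" "\<And>j. b j < x$j + d" by auto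
  define E where "E j = {t \<in> {a j<..<b j} \<inter> Iper. w t > q j}" for j
  have Em: "E j \<in> sets borel" for j unfolding E_def by measurable
  have Epos: "emeasure lborel (E j) \<noteq> 0" for j
  proof
    assume "emeasure lborel (E j) = 0"
    then have mem: "(a j, b j, q j) \<in> {(a,b,q). a\<in>\<rat> \<and> b\<in>\<rat> \<and> q\<in>\<rat> \<and> emeasure lborel {t \<in> {a<..<b} \<inter> Iper. w t > q} = 0}"
      using a(1) b(1) q(1) by (simp add: E_def)
    have "E j \<subseteq> NN w" unfolding NN_def
      by (rule Union_upper, rule image_eqI[OF _ mem]) (simp add: E_def)
    moreover have "x$j \<in> E j" using a b q x(1) by (auto simp: E_def Icube_def)
    ultimately show False using x(2) by blast
  qed
  define S where "S = {y::real^'n. \<forall>j. y$j \<in> E j}"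
  have Spos: "emeasure lborel S \<noteq> 0" unfolding S_def by (rule prod_box_pos[OF Em Epos])
  have bad: "\<not> (c y \<ge> ereal (\<Sum>j\<in>UNIV. w (y $ j)))" if y: "y \<in> S" for y
  proof -
    have yI: "y \<in> Icube" using y by (auto simp: S_def E_def Icube_def)
    have "dist y x \<le> (\<Sum>j\<in>UNIV. \<bar>(y - x)$j\<bar>)"
      unfolding dist_norm by (rule norm_le_l1_cart)
    also have "\<dots> < (\<Sum>j\<in>(UNIV::'n set). d)"
    proof -
      have bnd: "\<bar>(y - x)$j\<bar> < d" for j
      proof -
        have "y$j \<in> E j" using y by (simp add: S_def)
        then show ?thesis using a(2)[of j] b(3)[of j] by (auto simp: E_def)
      qed
      show ?thesis using sum_strict_mono[of "UNIV::'n set" "\<lambda>j. \<bar>(y - x)$j\<bar>" "\<lambda>j. d"] bnd by simp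
    qed
    also have "\<dots> = e" using n0 by (simp add: d_def n_def)
    finally have "y \<in> A" using e by (auto simp: dist_commute)
    then have c1: "c y < ereal Q" using A(3) yI by blast
    have c2: "Q < (\<Sum>j\<in>UNIV. w (y $ j))"
      unfolding Q_def
    proof (rule sum_strict_mono)
      fix j :: 'n
      have "y$j \<in> E j" using y by (simp add: S_def)
      then show "q j < w (y$j)" by (simp add: E_def)
    qed auto
    have "c y < ereal (\<Sum>j\<in>UNIV. w (y $ j))"
    proof -
      have "ereal Q < ereal (\<Sum>j\<in>UNIV. w (y $ j))" using c2 by (simp only: less_ereal.simps(1))
      then show ?thesis by (rule less_trans[OF c1])
    qed
    then show ?thesis by (simp add: not_le)
  qed
  from c_ge obtain N where N: "{y \<in> space lborel. \<not> (y \<in> Icube \<longrightarrow> c y \<ge> ereal (\<Sum>j\<in>UNIV. w (y $ j)))} \<subseteq> N"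
     "emeasure lborel N = 0" "N \<in> sets lborel"
    by (rule AE_E)
  have "S \<subseteq> N"
  proof
    fix y assume y: "y \<in> S"
    have "y \<in> Icube" using y by (auto simp: S_def E_def Icube_def)
    then show "y \<in> N" using N(1) bad[OF y] by auto
  qed
  then have "emeasure lborel S \<le> emeasure lborel N" by (rule emeasure_mono) (use N(3) in auto)
  then show False using N(2) Spos by auto
qed



locale cube_setup =
  fixes \<gamma> :: "(real^'n) measure" and \<rho> :: "real \<Rightarrow> real"
  assumes pc: "prob_on_cube \<gamma>" and \<rho>c: "continuous_on Iper \<rho>"
    and marg: "\<forall>A\<in>sets borel. (\<Sum>j\<in>UNIV. measure \<gamma> {x\<in>space \<gamma>. x $ j \<in> A})
                                 = (LINT t:(A \<inter> Iper)|lborel. \<rho> t)"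
begin

lemma ps: "prob_space \<gamma>" using pc by (simp add: prob_on_cube_def)
lemma sp: "space \<gamma> = Icube" using pc by (simp add: prob_on_cube_def)
lemma sets_g: "sets \<gamma> = sets (restrict_space borel Icube)" using pc by (simp add: prob_on_cube_def)

lemma nth_meas[measurable]: "(\<lambda>x. x$j) \<in> measurable \<gamma> borel"
  by (subst measurable_cong_sets[OF sets_g refl]) (intro measurable_restrict_space1 bm_vec_nth)


lemma rho_int: "integrable lborel (\<lambda>t. indicator Iper t *\<^sub>R \<rho> t)"
  by (rule borel_integrable_compact) (auto simp: Iper_def \<rho>c[unfolded Iper_def])

lemma rho_meas[measurable]: "(\<lambda>t. indicator Iper t * \<rho> t) \<in> borel_measurable borel"
  using borel_measurable_integrable[OF rho_int] by simp

lemma rho_bnd: "\<exists>B. \<forall>t\<in>Iper. \<bar>\<rho> t\<bar> \<le> B"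
proof -
  have "compact (\<rho> ` Iper)" by (rule compact_continuous_image[OF \<rho>c]) (simp add: Iper_def)
  then have "bounded (\<rho> ` Iper)" by (rule compact_imp_bounded)
  then show ?thesis unfolding bounded_iff by (auto simp: real_norm_def)
qed

lemma rho_nonneg: "AE t in lborel. t \<in> Iper \<longrightarrow> 0 \<le> \<rho> t"
proof -
  interpret prob_space \<gamma> by (rule ps)
  define h where "h t = indicator Iper t * \<rho> t" for t
  have hm[measurable]: "h \<in> borel_measurable borel" unfolding h_def by measurable
  define A0 where "A0 = {t. h t < 0}"
  have A0m: "A0 \<in> sets borel" unfolding A0_def by measurable
  have "0 \<le> (\<Sum>j\<in>UNIV. measure \<gamma> {x\<in>space \<gamma>. x $ j \<in> A0})"
    by (intro sum_nonneg measure_nonneg)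
  also have "\<dots> = (LINT t:(A0 \<inter> Iper)|lborel. \<rho> t)" using marg A0m by auto
  also have "\<dots> = integral\<^sup>L lborel (\<lambda>t. indicator A0 t * h t)"
    unfolding set_lebesgue_integral_def
    by (rule Bochner_Integration.integral_cong) (auto simp: h_def indicator_def)
  finally have i0: "0 \<le> integral\<^sup>L lborel (\<lambda>t. indicator A0 t * h t)" .
  define g where "g t = - (indicator A0 t * h t)" for t
  have gint: "integrable lborel g"
    unfolding g_def using integrable_mult_indicator[OF _ rho_int, of A0] A0m
    by (intro integrable_minus) (simp add: h_def)
  have g0: "AE t in lborel. 0 \<le> g t"
    by (auto simp: g_def A0_def indicator_def mult_le_0_iff)
  have "integral\<^sup>L lborel g \<le> 0" using i0 unfolding g_def[abs_def] by simp
  moreover have "0 \<le> integral\<^sup>L lborel g" using g0 by (rule integral_nonneg_AE)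
  ultimately have "integral\<^sup>L lborel g = 0" by simp
  then have "AE t in lborel. g t = 0" using integral_nonneg_eq_0_iff_AE[OF gint g0] by simp
  then show ?thesis
    by eventually_elim (auto simp: g_def A0_def h_def indicator_def split: if_splits)
qed


definition "PP = count_space (UNIV::'n set) \<Otimes>\<^sub>M \<gamma>"
definition "TT = (\<lambda>(j::'n, x::real^'n). x$j)"
definition "\<nu> = distr PP borel TT"

lemma TT_meas[measurable]: "TT \<in> measurable PP borel"
  unfolding PP_def TT_def
  by (rule measurable_pair_measure_countable1) auto

lemma emeasure_nu:
  assumes A: "A \<in> sets borel"
  shows "emeasure \<nu> A = (\<Sum>j\<in>UNIV. emeasure \<gamma> {x\<in>space \<gamma>. x $ j \<in> A})"
proof -
  interpret prob_space \<gamma> by (rule ps)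
  have X: "TT -` A \<inter> space PP \<in> sets PP" using A by measurable
  have "emeasure \<nu> A = emeasure PP (TT -` A \<inter> space PP)"
    unfolding \<nu>_def using A by (simp add: emeasure_distr)
  also have "\<dots> = (\<integral>\<^sup>+j. emeasure \<gamma> (Pair j -` (TT -` A \<inter> space PP)) \<partial>count_space UNIV)"
    using X unfolding PP_def by (rule emeasure_pair_measure_alt)
  also have "\<dots> = (\<Sum>j\<in>UNIV. emeasure \<gamma> (Pair j -` (TT -` A \<inter> space PP)))"
    by (simp add: nn_integral_count_space_finite)
  also have "\<dots> = (\<Sum>j\<in>UNIV. emeasure \<gamma> {x\<in>space \<gamma>. x $ j \<in> A})"
    by (intro sum.cong refl arg_cong2[where f=emeasure])
       (auto simp: PP_def TT_def space_pair_measure)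
  finally show ?thesis .
qed

lemma nu_density: "\<nu> = density lborel (\<lambda>t. ennreal (indicator Iper t * \<rho> t))"
proof (rule measure_eqI)
  interpret prob_space \<gamma> by (rule ps)
  show "sets \<nu> = sets (density lborel (\<lambda>t. ennreal (indicator Iper t * \<rho> t)))"
    by (simp add: \<nu>_def)
  fix A assume "A \<in> sets \<nu>"
  then have A[measurable]: "A \<in> sets borel" by (simp add: \<nu>_def)
  have "emeasure \<nu> A = (\<Sum>j\<in>UNIV. ennreal (measure \<gamma> {x\<in>space \<gamma>. x $ j \<in> A}))"
    by (simp add: emeasure_nu[OF A] emeasure_eq_measure)
  also have "\<dots> = ennreal (\<Sum>j\<in>UNIV. measure \<gamma> {x\<in>space \<gamma>. x $ j \<in> A})"
    by (rule sum_ennreal) simp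
  also have "\<dots> = ennreal (LINT t:(A \<inter> Iper)|lborel. \<rho> t)" using marg A by auto
  also have "(LINT t:(A \<inter> Iper)|lborel. \<rho> t) = integral\<^sup>L lborel (\<lambda>t. indicator A t * (indicator Iper t * \<rho> t))"
    unfolding set_lebesgue_integral_def
    by (rule Bochner_Integration.integral_cong) (auto simp: indicator_def)
  also have "ennreal \<dots> = (\<integral>\<^sup>+t. ennreal (indicator A t * (indicator Iper t * \<rho> t)) \<partial>lborel)"
  proof (rule nn_integral_eq_integral[symmetric])
    show "integrable lborel (\<lambda>t. indicator A t * (indicator Iper t * \<rho> t))"
      using integrable_mult_indicator[OF _ rho_int, of A] by simp
    show "AE t in lborel. 0 \<le> indicator A t * (indicator Iper t * \<rho> t)"
      using rho_nonneg by eventually_elim (auto simp: indicator_def)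
  qed
  also have "\<dots> = emeasure (density lborel (\<lambda>t. ennreal (indicator Iper t * \<rho> t))) A"
  proof -
    have dm: "(\<lambda>t. ennreal (indicator Iper t * \<rho> t)) \<in> borel_measurable lborel" by simp
    show ?thesis
      by (subst emeasure_density[OF dm]) (auto intro!: nn_integral_cong simp: indicator_def)
  qed
  finally show "emeasure \<nu> A = emeasure (density lborel (\<lambda>t. ennreal (indicator Iper t * \<rho> t))) A" .
qed

lemma marg_integral:
  fixes w :: "real \<Rightarrow> real"
  assumes wint: "integrable lborel w"
  shows "integrable \<gamma> (\<lambda>x. \<Sum>j\<in>UNIV. w (x$j))"
    and "(\<integral>x. (\<Sum>j\<in>UNIV. w (x$j)) \<partial>\<gamma>) = (LINT t:Iper|lborel. \<rho> t * w t)"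
proof -
  interpret prob_space \<gamma> by (rule ps)
  interpret C: finite_measure "count_space (UNIV::'n set)" by (rule finite_measure_count_space) simp
  interpret P: pair_sigma_finite "count_space (UNIV::'n set)" \<gamma>
    by (intro pair_sigma_finite.intro C.sigma_finite_measure_axioms sigma_finite_measure_axioms)
  have wm[measurable]: "w \<in> borel_measurable borel"
    using borel_measurable_integrable[OF wint] by simp
  define r where "r t = indicator Iper t * \<rho> t" for t
  have rm[measurable]: "r \<in> borel_measurable borel" unfolding r_def by measurable
  obtain B where B: "\<forall>t\<in>Iper. \<bar>\<rho> t\<bar> \<le> B" using rho_bnd by blast
  have rw_int: "integrable lborel (\<lambda>t. r t *\<^sub>R w t)"
  proof (rule Bochner_Integration.integrable_bound)
    show "integrable lborel (\<lambda>t. B * w t)" using wint by simp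
    show "(\<lambda>t. r t *\<^sub>R w t) \<in> borel_measurable lborel" by simp
    show "AE t in lborel. norm (r t *\<^sub>R w t) \<le> norm (B * w t)"
    proof (rule AE_I2)
      fix t
      have "\<bar>r t\<bar> \<le> \<bar>B\<bar>" using B by (auto simp: r_def indicator_def)
      then show "norm (r t *\<^sub>R w t) \<le> norm (B * w t)"
        by (simp add: abs_mult mult_right_mono)
    qed
  qed
  have r0: "AE t in lborel. 0 \<le> r t" using rho_nonneg by eventually_elim (auto simp: r_def indicator_def)
  have nu_eq: "\<nu> = density lborel (\<lambda>t. ennreal (r t))" unfolding r_def by (rule nu_density)
  have int_nu: "integrable \<nu> w"
    unfolding nu_eq using rw_int r0 by (subst integrable_density) auto
  have int_P: "integrable PP (\<lambda>p. w (TT p))"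
    using int_nu unfolding \<nu>_def by (subst (asm) integrable_distr_eq) auto
  then have int_P': "integrable (count_space UNIV \<Otimes>\<^sub>M \<gamma>) (\<lambda>(j, x). w (x$j))"
    by (simp add: PP_def TT_def case_prod_beta')
  have intj: "integrable \<gamma> (\<lambda>x. w (x$j))" for j
  proof -
    have "AE j in count_space UNIV. integrable \<gamma> (\<lambda>x. (\<lambda>(j, x). w (x$j)) (j, x))"
      by (rule P.AE_integrable_fst'[OF int_P'])
    then show ?thesis by (simp add: AE_count_space)
  qed
  show "integrable \<gamma> (\<lambda>x. \<Sum>j\<in>UNIV. w (x$j))" by (rule Bochner_Integration.integrable_sum[where f="\<lambda>j x. w (x$j)"]) (rule intj)
  have "(\<integral>x. (\<Sum>j\<in>UNIV. w (x$j)) \<partial>\<gamma>) = (\<Sum>j\<in>UNIV. \<integral>x. w (x$j) \<partial>\<gamma>)"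
    by (rule Bochner_Integration.integral_sum[where f="\<lambda>j x. w (x$j)"]) (rule intj)
  also have "\<dots> = (\<integral>j. (\<integral>x. (\<lambda>(j, x). w (x$j)) (j, x) \<partial>\<gamma>) \<partial>count_space UNIV)"
    by (simp add: lebesgue_integral_count_space_finite)
  also have "\<dots> = integral\<^sup>L (count_space UNIV \<Otimes>\<^sub>M \<gamma>) (\<lambda>(j, x). w (x$j))"
    by (rule P.integral_fst'[OF int_P'])
  also have "\<dots> = integral\<^sup>L PP (\<lambda>p. w (TT p))"
    by (simp add: PP_def TT_def case_prod_beta')
  also have "\<dots> = integral\<^sup>L \<nu> w"
    unfolding \<nu>_def by (rule integral_distr[symmetric]) auto
  also have "\<dots> = integral\<^sup>L lborel (\<lambda>t. r t *\<^sub>R w t)"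
    unfolding nu_eq using r0 by (subst integral_density) auto
  also have "\<dots> = (LINT t:Iper|lborel. \<rho> t * w t)"
    unfolding set_lebesgue_integral_def
    by (rule Bochner_Integration.integral_cong) (auto simp: r_def indicator_def)
  finally show "(\<integral>x. (\<Sum>j\<in>UNIV. w (x$j)) \<partial>\<gamma>) = (LINT t:Iper|lborel. \<rho> t * w t)" .
qed

lemma null_marg:
  assumes N: "N \<in> null_sets lborel"
  shows "AE x in \<gamma>. \<forall>j. x$j \<notin> N"
proof -
  interpret prob_space \<gamma> by (rule ps)
  have Nb: "N \<in> sets borel" using N by (simp add: null_sets_def)
  have "(LINT t:(N \<inter> Iper)|lborel. \<rho> t) = 0"
    unfolding set_lebesgue_integral_def
    by (rule integral_eq_zero_AE) (use AE_not_in[OF N] in \<open>auto simp: indicator_def\<close>)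
  then have "(\<Sum>j\<in>UNIV. measure \<gamma> {x\<in>space \<gamma>. x $ j \<in> N}) = 0" using marg Nb by auto
  then have z: "measure \<gamma> {x\<in>space \<gamma>. x $ j \<in> N} = 0" for j
    using sum_nonneg_eq_0_iff[of UNIV "\<lambda>j. measure \<gamma> {x\<in>space \<gamma>. x $ j \<in> N}"] by auto
  have "AE x in \<gamma>. x \<notin> {x\<in>space \<gamma>. x $ j \<in> N}" for j
  proof (rule AE_not_in)
    have "{x\<in>space \<gamma>. x $ j \<in> N} \<in> sets \<gamma>" using Nb by measurable
    then show "{x\<in>space \<gamma>. x $ j \<in> N} \<in> null_sets \<gamma>"
      using z[of j] by (simp add: null_sets_def emeasure_eq_measure)
  qed
  then have "\<forall>j\<in>UNIV. AE x in \<gamma>. x \<notin> {x\<in>space \<gamma>. x $ j \<in> N}" by blast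
  then have "AE x in \<gamma>. \<forall>j\<in>UNIV. x \<notin> {x\<in>space \<gamma>. x $ j \<in> N}"
    by (subst AE_finite_all) auto
  then show ?thesis using AE_space by eventually_elim auto
qed

end



lemma ereal_ge0_minus: "0 \<le> a - ereal s \<longleftrightarrow> ereal s \<le> (a::ereal)"
  by (cases a) auto

lemma ereal_int_ge:
  fixes f :: "'a \<Rightarrow> real" and c :: "'a \<Rightarrow> ereal"
  assumes f: "integrable M f" and ge: "AE x in M. c x \<ge> ereal (f x)"
  shows "ereal_integral M c \<ge> ereal (integral\<^sup>L M f)"
proof -
  define Fp where "Fp = (\<integral>\<^sup>+x. ennreal (f x) \<partial>M)"
  define Fm where "Fm = (\<integral>\<^sup>+x. ennreal (- f x) \<partial>M)"
  define Xp where "Xp = (\<integral>\<^sup>+x. e2ennreal (c x) \<partial>M)"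
  define Xm where "Xm = (\<integral>\<^sup>+x. e2ennreal (- c x) \<partial>M)"
  have fin: "Fp < \<infinity>" "Fm < \<infinity>"
    using f unfolding real_integrable_def Fp_def Fm_def by (auto simp: top.not_eq_extremum)
  have I: "integral\<^sup>L M f = enn2real Fp - enn2real Fm"
    unfolding Fp_def Fm_def by (rule real_lebesgue_integral_def[OF f])
  have "Fp \<le> Xp" unfolding Fp_def Xp_def
    using ge by (intro nn_integral_mono_AE) (auto elim!: eventually_mono dest: e2ennreal_mono)
  then have 1: "ereal (enn2real Fp) \<le> enn2ereal Xp"
    using fin by (cases Fp rule: ennreal_cases) (auto simp: less_eq_ennreal.rep_eq)
  have "Xm \<le> Fm" unfolding Fm_def Xm_def
  proof (intro nn_integral_mono_AE)
    show "AE x in M. e2ennreal (- c x) \<le> ennreal (- f x)"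
      using ge
    proof eventually_elim
      case (elim x)
      then have "- c x \<le> ereal (- f x)" by (cases "c x") auto
      then show ?case by (metis e2ennreal_ereal e2ennreal_mono)
    qed
  qed
  then have 2: "enn2ereal Xm \<le> ereal (enn2real Fm)"
    using fin by (cases Fm rule: ennreal_cases) (auto simp: less_eq_ennreal.rep_eq)
  have "ereal (enn2real Fp) - ereal (enn2real Fm) \<le> enn2ereal Xp - enn2ereal Xm"
    by (rule ereal_minus_mono[OF 1 2])
  then show ?thesis
    unfolding ereal_integral_def I Xp_def[symmetric] Xm_def[symmetric] by simp
qed

lemma part1:
  fixes c :: "real ^ 'n \<Rightarrow> ereal" and v :: "real \<Rightarrow> real" and \<gamma> :: "(real^'n) measure"
  assumes c_cont: "continuous_on Icube c"
    and c_not_minf: "\<forall>x\<in>Icube. c x \<noteq> -\<infinity>"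
    and v_L1: "set_integrable lborel Iper v"
    and c_ge: "AE x in lborel. x \<in> Icube \<longrightarrow> c x - ereal (\<Sum>j\<in>UNIV. v (x $ j)) \<ge> 0"
    and pc: "prob_on_cube \<gamma>" and \<rho>c: "continuous_on Iper \<rho>"
    and marg: "\<forall>A\<in>sets borel. (\<Sum>j\<in>UNIV. measure \<gamma> {x\<in>space \<gamma>. x $ j \<in> A})
                                 = (LINT t:(A \<inter> Iper)|lborel. \<rho> t)"
  shows "ereal_integral \<gamma> c - ereal (LINT t:Iper|lborel. \<rho> t * v t) \<ge> 0"
proof -
  interpret cube_setup \<gamma> \<rho> by unfold_locales (rule pc \<rho>c marg)+
  interpret prob_space \<gamma> by (rule ps)
  define w where "w t = indicator Iper t * v t" for t
  have wint: "integrable lborel w"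
    using v_L1 unfolding set_integrable_def w_def by simp
  have wm[measurable]: "w \<in> borel_measurable borel"
    using borel_measurable_integrable[OF wint] by simp
  have wv: "x \<in> Icube \<Longrightarrow> (\<Sum>j\<in>UNIV. w (x $ j)) = (\<Sum>j\<in>UNIV. v (x $ j))" for x
    by (intro sum.cong refl) (auto simp: w_def Icube_def)
  have c_ge': "AE x in lborel. x \<in> Icube \<longrightarrow> c x \<ge> ereal (\<Sum>j\<in>UNIV. w (x $ j))"
    using c_ge by eventually_elim (auto simp: wv ereal_ge0_minus)
  have AEg: "AE x in \<gamma>. c x \<ge> ereal (\<Sum>j\<in>UNIV. w (x $ j))"
    using null_marg[OF NN_null[OF wm]] AE_space
  proof eventually_elim
    case (elim x)
    then show ?case using pointwise[OF c_cont c_not_minf wm c_ge', of x] by (simp add: sp)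
  qed
  have "ereal (integral\<^sup>L \<gamma> (\<lambda>x. \<Sum>j\<in>UNIV. w (x $ j))) \<le> ereal_integral \<gamma> c"
    by (rule ereal_int_ge[OF marg_integral(1)[OF wint] AEg])
  also have "integral\<^sup>L \<gamma> (\<lambda>x. \<Sum>j\<in>UNIV. w (x $ j)) = (LINT t:Iper|lborel. \<rho> t * w t)"
    by (rule marg_integral(2)[OF wint])
  also have "\<dots> = (LINT t:Iper|lborel. \<rho> t * v t)"
    unfolding set_lebesgue_integral_def
    by (rule Bochner_Integration.integral_cong) (auto simp: w_def indicator_def)
  finally show ?thesis by (simp add: ereal_ge0_minus)
qed



lemma Iper_eq: "Iper = {0..2*pi}" by (simp add: Iper_def)

lemma H1per_cont:
  assumes "H1per \<xi>" shows "continuous_on Iper \<xi>"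
proof -
  obtain g where g: "h1per_deriv \<xi> g" using assms by (auto simp: H1per_def)
  have gi: "set_integrable lborel Iper g" using g by (simp add: h1per_deriv_def)
  have rep: "\<forall>x\<in>Iper. \<xi> x = \<xi> 0 + (LINT t:{0..x}|lborel. g t)" using g by (simp add: h1per_deriv_def)
  have gon: "g integrable_on {0..2*pi}"
    using set_borel_integral_eq_integral(1)[OF gi] by (simp add: Iper_def)
  have c1: "continuous_on {0..2*pi} (\<lambda>x. integral {0..x} g)"
    by (rule indefinite_integral_continuous_1[OF gon])
  have eq: "\<xi> x = \<xi> 0 + integral {0..x} g" if x: "x \<in> {0..2*pi}" for x
  proof -
    have s1: "{0..x} \<in> sets lborel" by simp
    have s2: "{0..x} \<subseteq> Iper" using x by (simp add: Iper_def)
    have "set_integrable lborel {0..x} g"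
      by (rule set_integrable_subset[OF gi s1 s2])
    then have "(LINT t:{0..x}|lborel. g t) = integral {0..x} g"
      by (rule set_borel_integral_eq_integral(2))
    moreover have "\<xi> x = \<xi> 0 + (LINT t:{0..x}|lborel. g t)" using rep s2 x by auto
    ultimately show ?thesis by simp
  qed
  have "continuous_on {0..2*pi} (\<lambda>x. \<xi> 0 + integral {0..x} g)"
    by (intro continuous_on_add continuous_on_const c1)
  then show ?thesis unfolding Iper_eq by (rule continuous_on_eq) (rule eq[symmetric])
qed

lemma H1per_bounded:
  assumes "H1per \<xi>" shows "\<exists>M\<ge>0. \<forall>x\<in>Iper. \<bar>\<xi> x\<bar> \<le> M"
proof -
  have "compact (\<xi> ` Iper)" by (rule compact_continuous_image[OF H1per_cont[OF assms]]) (simp add: Iper_def)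
  then have "bounded (\<xi> ` Iper)" by (rule compact_imp_bounded)
  then obtain M where "\<forall>x\<in>Iper. \<bar>\<xi> x\<bar> \<le> M" unfolding bounded_iff by (auto simp: real_norm_def)
  moreover have "0 \<in> Iper" by (simp add: Iper_def)
  ultimately show ?thesis by (intro exI[of _ M]) force
qed

lemma sq_bound: "(a * p + b * q)\<^sup>2 \<le> 2 * a\<^sup>2 * p\<^sup>2 + 2 * b\<^sup>2 * q\<^sup>2" for a b p q :: real
proof -
  have "0 \<le> (a * p - b * q)\<^sup>2" by simp
  then show ?thesis by (simp add: power2_eq_square algebra_simps)
qed

lemma H1per_lin:
  assumes "H1per \<xi>" "H1per \<eta>"
  shows "H1per (\<lambda>x. a * \<xi> x + b * \<eta> x)"
proof -
  obtain g1 where g1: "h1per_deriv \<xi> g1" using assms by (auto simp: H1per_def)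
  obtain g2 where g2: "h1per_deriv \<eta> g2" using assms by (auto simp: H1per_def)
  define g where "g t = a * g1 t + b * g2 t" for t
  have i1: "set_integrable lborel Iper g1" and i2: "set_integrable lborel Iper g2"
    using g1 g2 by (auto simp: h1per_deriv_def)
  have s1: "set_integrable lborel Iper (\<lambda>x. (g1 x)\<^sup>2)" and s2: "set_integrable lborel Iper (\<lambda>x. (g2 x)\<^sup>2)"
    using g1 g2 by (auto simp: h1per_deriv_def)
  have ig: "set_integrable lborel Iper g"
    unfolding g_def using i1 i2 by (intro set_integral_add(1)) auto
  have m1: "(\<lambda>x. indicator Iper x *\<^sub>R g1 x) \<in> borel_measurable lborel"
    using i1 unfolding set_integrable_def by (rule borel_measurable_integrable)
  have m2: "(\<lambda>x. indicator Iper x *\<^sub>R g2 x) \<in> borel_measurable lborel"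
    using i2 unfolding set_integrable_def by (rule borel_measurable_integrable)
  have sg: "set_integrable lborel Iper (\<lambda>x. (g x)\<^sup>2)"
    unfolding set_integrable_def
  proof (rule Bochner_Integration.integrable_bound)
    show "integrable lborel (\<lambda>x. indicator Iper x *\<^sub>R (2 * a\<^sup>2 * (g1 x)\<^sup>2 + 2 * b\<^sup>2 * (g2 x)\<^sup>2))"
      using set_integral_add(1)[OF set_integrable_mult_right[OF s1] set_integrable_mult_right[OF s2], of "2 * a\<^sup>2" "2 * b\<^sup>2"]
      unfolding set_integrable_def by (simp add: mult.assoc)
    have "(\<lambda>x. (a * (indicator Iper x *\<^sub>R g1 x) + b * (indicator Iper x *\<^sub>R g2 x))\<^sup>2) \<in> borel_measurable lborel"
      using m1 m2 by measurable
    moreover have "(\<lambda>x. (a * (indicator Iper x *\<^sub>R g1 x) + b * (indicator Iper x *\<^sub>R g2 x))\<^sup>2)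
        = (\<lambda>x. indicator Iper x *\<^sub>R (g x)\<^sup>2)"
      by (auto simp: g_def indicator_def fun_eq_iff)
    ultimately show "(\<lambda>x. indicator Iper x *\<^sub>R (g x)\<^sup>2) \<in> borel_measurable lborel" by simp
    show "AE x in lborel. norm (indicator Iper x *\<^sub>R (g x)\<^sup>2)
        \<le> norm (indicator Iper x *\<^sub>R (2 * a\<^sup>2 * (g1 x)\<^sup>2 + 2 * b\<^sup>2 * (g2 x)\<^sup>2))"
    proof (rule AE_I2)
      fix x
      have "(g x)\<^sup>2 \<le> 2 * a\<^sup>2 * (g1 x)\<^sup>2 + 2 * b\<^sup>2 * (g2 x)\<^sup>2" unfolding g_def by (rule sq_bound)
      moreover have "0 \<le> (g x)\<^sup>2" by simp
      ultimately show "norm (indicator Iper x *\<^sub>R (g x)\<^sup>2)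
        \<le> norm (indicator Iper x *\<^sub>R (2 * a\<^sup>2 * (g1 x)\<^sup>2 + 2 * b\<^sup>2 * (g2 x)\<^sup>2))"
        by (auto simp: indicator_def)
    qed
  qed
  have rep: "a * \<xi> x + b * \<eta> x = (a * \<xi> 0 + b * \<eta> 0) + (LINT t:{0..x}|lborel. g t)" if x: "x \<in> Iper" for x
  proof -
    have sub: "{0..x} \<subseteq> Iper" using x by (auto simp: Iper_def)
    have s1: "{0..x} \<in> sets lborel" by simp
    have j1: "set_integrable lborel {0..x} g1" by (rule set_integrable_subset[OF i1 s1 sub])
    have j2: "set_integrable lborel {0..x} g2" by (rule set_integrable_subset[OF i2 s1 sub])
    have "(LINT t:{0..x}|lborel. g t) = a * (LINT t:{0..x}|lborel. g1 t) + b * (LINT t:{0..x}|lborel. g2 t)"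
      unfolding g_def using j1 j2 by (subst set_integral_add(2)) auto
    moreover have "\<xi> x = \<xi> 0 + (LINT t:{0..x}|lborel. g1 t)"
      using g1 x unfolding h1per_deriv_def by blast
    moreover have "\<eta> x = \<eta> 0 + (LINT t:{0..x}|lborel. g2 t)"
      using g2 x unfolding h1per_deriv_def by blast
    ultimately show ?thesis by (simp add: algebra_simps)
  qed
  have "h1per_deriv (\<lambda>x. a * \<xi> x + b * \<eta> x) g"
  proof -
    have p1: "\<xi> 0 = \<xi> (2 * pi)" using g1 unfolding h1per_deriv_def by blast
    have p2: "\<eta> 0 = \<eta> (2 * pi)" using g2 unfolding h1per_deriv_def by blast
    have per: "a * \<xi> 0 + b * \<eta> 0 = a * \<xi> (2 * pi) + b * \<eta> (2 * pi)" using p1 p2 by simp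
    show ?thesis unfolding h1per_deriv_def
      by (intro conjI ig sg ballI rep per)
  qed
  then show ?thesis by (auto simp: H1per_def)
qed

lemma L1_integrable:
  fixes v \<xi> :: "real \<Rightarrow> real"
  assumes v: "set_integrable lborel Iper v" and \<xi>: "continuous_on Iper \<xi>"
  shows "set_integrable lborel Iper (\<lambda>x. v x * \<xi> x)"
proof -
  have "compact (\<xi> ` Iper)" by (rule compact_continuous_image[OF \<xi>]) (simp add: Iper_def)
  then have "bounded (\<xi> ` Iper)" by (rule compact_imp_bounded)
  then obtain M where M: "\<forall>x\<in>Iper. \<bar>\<xi> x\<bar> \<le> M" unfolding bounded_iff by (auto simp: real_norm_def)
  have mv: "(\<lambda>x. indicator Iper x *\<^sub>R v x) \<in> borel_measurable lborel"
    using v unfolding set_integrable_def by (rule borel_measurable_integrable)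
  have mx: "(\<lambda>x. indicator Iper x *\<^sub>R \<xi> x) \<in> borel_measurable borel"
    by (rule borel_measurable_continuous_on_indicator[OF _ \<xi>]) (simp add: Iper_def)
  show ?thesis unfolding set_integrable_def
  proof (rule Bochner_Integration.integrable_bound)
    show "integrable lborel (\<lambda>x. M * (indicator Iper x *\<^sub>R v x))"
      using v unfolding set_integrable_def by simp
    have "(\<lambda>x. (indicator Iper x *\<^sub>R v x) * (indicator Iper x *\<^sub>R \<xi> x)) \<in> borel_measurable lborel"
      using mv mx by measurable
    moreover have "(\<lambda>x. (indicator Iper x *\<^sub>R v x) * (indicator Iper x *\<^sub>R \<xi> x)) = (\<lambda>x. indicator Iper x *\<^sub>R (v x * \<xi> x))"
      by (auto simp: indicator_def fun_eq_iff)
    ultimately show "(\<lambda>x. indicator Iper x *\<^sub>R (v x * \<xi> x)) \<in> borel_measurable lborel" by simp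
    show "AE x in lborel. norm (indicator Iper x *\<^sub>R (v x * \<xi> x)) \<le> norm (M * (indicator Iper x *\<^sub>R v x))"
    proof (rule AE_I2)
      fix x
      show "norm (indicator Iper x *\<^sub>R (v x * \<xi> x)) \<le> norm (M * (indicator Iper x *\<^sub>R v x))"
      proof (cases "x \<in> Iper")
        case True
        then have "\<bar>\<xi> x\<bar> \<le> \<bar>M\<bar>" using M by force
        then have "\<bar>\<xi> x\<bar> * \<bar>v x\<bar> \<le> \<bar>M\<bar> * \<bar>v x\<bar>" by (rule mult_right_mono) simp
        then show ?thesis using True by (simp add: abs_mult mult.commute)
      qed simp
    qed
  qed
qed

lemma L1_lin:
  fixes v \<xi> \<eta> :: "real \<Rightarrow> real"
  assumes v: "set_integrable lborel Iper v" and "continuous_on Iper \<xi>" "continuous_on Iper \<eta>"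
  shows "L1_pair v (\<lambda>x. a * \<xi> x + b * \<eta> x) = a * L1_pair v \<xi> + b * L1_pair v \<eta>"
proof -
  have i1: "set_integrable lborel Iper (\<lambda>x. v x * \<xi> x)" by (rule L1_integrable[OF v assms(2)])
  have i2: "set_integrable lborel Iper (\<lambda>x. v x * \<eta> x)" by (rule L1_integrable[OF v assms(3)])
  have "L1_pair v (\<lambda>x. a * \<xi> x + b * \<eta> x) = (LINT x:Iper|lborel. a * (v x * \<xi> x) + b * (v x * \<eta> x))"
    unfolding L1_pair_def by (simp add: algebra_simps)
  also have "\<dots> = (LINT x:Iper|lborel. a * (v x * \<xi> x)) + (LINT x:Iper|lborel. b * (v x * \<eta> x))"
    using i1 i2 by (intro set_integral_add(2)) auto
  also have "\<dots> = a * L1_pair v \<xi> + b * L1_pair v \<eta>"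
    by (simp add: L1_pair_def)
  finally show ?thesis .
qed



lemma nth_meas_cube:
  assumes "prob_on_cube \<gamma>"
  shows "(\<lambda>x. x$j) \<in> measurable \<gamma> borel"
proof -
  have "sets \<gamma> = sets (restrict_space borel Icube)" using assms by (simp add: prob_on_cube_def)
  then show ?thesis
    by (subst measurable_cong_sets[OF _ refl]) (auto intro: measurable_restrict_space1 bm_vec_nth)
qed

lemma marg_from:
  fixes \<gamma> :: "(real^'n) measure" and \<rho> :: "real \<Rightarrow> real"
  assumes pc: "prob_on_cube \<gamma>" and hm: "has_marginals \<gamma> \<rho>" and \<rho>c: "continuous_on Iper \<rho>"
    and pos: "\<forall>x\<in>Iper. \<rho> x > 0"
  shows "\<forall>A\<in>sets borel. (\<Sum>j\<in>UNIV. measure \<gamma> {x\<in>space \<gamma>. x $ j \<in> A})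
                                 = (LINT t:(A \<inter> Iper)|lborel. real CARD('n) * \<rho> t)"
proof
  fix A :: "real set" assume A[measurable]: "A \<in> sets borel"
  have rint: "integrable lborel (\<lambda>t. indicator Iper t *\<^sub>R \<rho> t)"
    by (rule borel_integrable_compact) (auto simp: Iper_def \<rho>c[unfolded Iper_def])
  have rm[measurable]: "(\<lambda>t. indicator Iper t * \<rho> t) \<in> borel_measurable borel"
    using borel_measurable_integrable[OF rint] by simp
  have one: "measure \<gamma> {x\<in>space \<gamma>. x $ j \<in> A} = (LINT t:(A \<inter> Iper)|lborel. \<rho> t)" for j
  proof -
    have nm: "(\<lambda>x. x$j) \<in> measurable \<gamma> borel" by (rule nth_meas_cube[OF pc])
    have "measure \<gamma> {x\<in>space \<gamma>. x $ j \<in> A} = measure (distr \<gamma> borel (\<lambda>x. x$j)) A"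
      by (subst measure_distr[OF nm A]) (auto intro!: arg_cong[where f="measure \<gamma>"])
    also have "\<dots> = measure (density lborel (\<lambda>t. ennreal (\<rho> t) * indicator Iper t)) A"
      using hm by (simp add: has_marginals_def)
    also have "\<dots> = enn2real (\<integral>\<^sup>+t. ennreal (\<rho> t) * indicator Iper t * indicator A t \<partial>lborel)"
    proof -
      have dm: "(\<lambda>t. ennreal (\<rho> t) * indicator Iper t) \<in> borel_measurable lborel"
      proof -
        have "(\<lambda>t. ennreal (indicator Iper t * \<rho> t)) \<in> borel_measurable lborel" by simp
        moreover have "(\<lambda>t. ennreal (indicator Iper t * \<rho> t)) = (\<lambda>t. ennreal (\<rho> t) * indicator Iper t)"
          by (auto simp: indicator_def fun_eq_iff)
        ultimately show ?thesis by simp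
      qed
      show ?thesis unfolding measure_def by (subst emeasure_density[OF dm]) auto
    qed
    also have "(\<integral>\<^sup>+t. ennreal (\<rho> t) * indicator Iper t * indicator A t \<partial>lborel)
        = (\<integral>\<^sup>+t. ennreal (indicator (A \<inter> Iper) t *\<^sub>R \<rho> t) \<partial>lborel)"
      by (intro nn_integral_cong) (auto simp: indicator_def)
    also have "\<dots> = ennreal (LINT t:(A \<inter> Iper)|lborel. \<rho> t)"
      unfolding set_lebesgue_integral_def
    proof (rule nn_integral_eq_integral)
      show "integrable lborel (\<lambda>t. indicator (A \<inter> Iper) t *\<^sub>R \<rho> t)"
        using integrable_mult_indicator[OF _ rint, of A] by (simp add: indicator_inter_arith mult.assoc)
      show "AE t in lborel. 0 \<le> indicator (A \<inter> Iper) t *\<^sub>R \<rho> t"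
        using pos by (auto simp: indicator_def less_imp_le)
    qed
    also have "enn2real \<dots> = (LINT t:(A \<inter> Iper)|lborel. \<rho> t)"
    proof (rule enn2real_ennreal)
      show "0 \<le> (LINT t:(A \<inter> Iper)|lborel. \<rho> t)"
        unfolding set_lebesgue_integral_def
        using pos by (intro integral_nonneg_AE) (auto simp: indicator_def less_imp_le)
    qed
    finally show ?thesis .
  qed
  show "(\<Sum>j\<in>UNIV. measure \<gamma> {x\<in>space \<gamma>. x $ j \<in> A}) = (LINT t:(A \<inter> Iper)|lborel. real CARD('n) * \<rho> t)"
    by (simp add: one)
qed



lemma part2:
  fixes c :: "real ^ 'n \<Rightarrow> ereal" and v :: "real \<Rightarrow> real"
  assumes P1: "\<forall>\<gamma> \<rho>\<gamma>. prob_on_cube \<gamma> \<and> continuous_on Iper \<rho>\<gamma>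
            \<and> (\<forall>A\<in>sets borel. (\<Sum>j\<in>UNIV. measure \<gamma> {x\<in>space \<gamma>. x $ j \<in> A})
                                 = (LINT t:(A \<inter> Iper)|lborel. \<rho>\<gamma> t))
          \<longrightarrow> ereal_integral \<gamma> c - ereal (LINT t:Iper|lborel. \<rho>\<gamma> t * v t) \<ge> 0"
    and v_L1: "set_integrable lborel Iper v"
    and D: "Dper \<rho>" and NK: "normalized_gen_kantorovich_potential c \<rho> v0"
    and pos: "\<forall>\<xi>. H1per \<xi> \<and> (\<forall>x\<in>Iper. \<xi> x \<ge> 0) \<longrightarrow> L1_pair v \<xi> - v0 \<xi> \<ge> 0"
  shows "\<forall>\<xi>. H1per \<xi> \<longrightarrow> L1_pair v \<xi> = v0 \<xi>"
proof -
  define n where "n = real CARD('n)"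
  have n0: "n > 0" by (simp add: n_def)
  have H\<rho>: "H1per \<rho>" and \<rho>pos: "\<forall>x\<in>Iper. \<rho> x > 0" using D by (auto simp: Dper_def)
  have \<rho>c: "continuous_on Iper \<rho>" by (rule H1per_cont[OF H\<rho>])
  have F: "F_OT c \<rho> = ereal (n * v0 \<rho>)" using NK by (simp add: normalized_gen_kantorovich_potential_def n_def)
  have Hm: "Hm1per v0" using NK by (simp add: normalized_gen_kantorovich_potential_def gen_kantorovich_potential_def)
  have v0lin: "H1per \<xi> \<Longrightarrow> H1per \<eta> \<Longrightarrow> v0 (\<lambda>x. a * \<xi> x + b * \<eta> x) = a * v0 \<xi> + b * v0 \<eta>" for \<xi> \<eta> a b
    using Hm unfolding Hm1per_def by blast
  have lb: "ereal (n * L1_pair v \<rho>) \<le> e"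
    if em: "e \<in> {ereal_integral \<gamma> c | \<gamma>. prob_on_cube \<gamma> \<and> has_marginals \<gamma> \<rho>}" for e
  proof -
    obtain \<gamma> where e: "e = ereal_integral \<gamma> c" and pc: "prob_on_cube \<gamma>" and hm: "has_marginals \<gamma> \<rho>"
      using em by blast
    have mg: "\<forall>A\<in>sets borel. (\<Sum>j\<in>UNIV. measure \<gamma> {x\<in>space \<gamma>. x $ j \<in> A})
                                 = (LINT t:(A \<inter> Iper)|lborel. n * \<rho> t)"
      unfolding n_def by (rule marg_from[OF pc hm \<rho>c \<rho>pos])
    have cc: "continuous_on Iper (\<lambda>t. n * \<rho> t)" by (intro continuous_intros \<rho>c)
    have "ereal_integral \<gamma> c - ereal (LINT t:Iper|lborel. n * \<rho> t * v t) \<ge> 0"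
      using P1 pc cc mg by blast
    moreover have "(LINT t:Iper|lborel. n * \<rho> t * v t) = n * L1_pair v \<rho>"
    proof -
      have "(LINT t:Iper|lborel. n * \<rho> t * v t) = (LINT t:Iper|lborel. n * (v t * \<rho> t))"
        by (simp add: mult_ac)
      also have "\<dots> = n * L1_pair v \<rho>" by (simp add: L1_pair_def)
      finally show ?thesis .
    qed
    ultimately show ?thesis using e by (simp add: ereal_ge0_minus)
  qed
  have "ereal (n * L1_pair v \<rho>) \<le> F_OT c \<rho>"
    unfolding F_OT_def by (rule Inf_greatest) (rule lb)
  then have "n * L1_pair v \<rho> \<le> n * v0 \<rho>" using F by simp
  then have W\<rho>: "L1_pair v \<rho> - v0 \<rho> \<le> 0" using n0 by simp
  have "\<exists>x\<in>Iper. \<forall>y\<in>Iper. \<rho> x \<le> \<rho> y"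
    by (rule continuous_attains_inf[OF _ _ \<rho>c]) (auto simp: Iper_def)
  then obtain x0 where x0: "x0 \<in> Iper" "\<forall>y\<in>Iper. \<rho> x0 \<le> \<rho> y" by blast
  define m where "m = \<rho> x0"
  have m0: "m > 0" using \<rho>pos x0 by (simp add: m_def)
  have mle: "\<forall>y\<in>Iper. m \<le> \<rho> y" using x0 by (simp add: m_def)
  show ?thesis
  proof (intro allI impI)
    fix \<xi> assume H\<xi>: "H1per \<xi>"
    obtain M where M: "M \<ge> 0" "\<forall>x\<in>Iper. \<bar>\<xi> x\<bar> \<le> M" using H1per_bounded[OF H\<xi>] by blast
    define C where "C = M / m"
    have C0: "C \<ge> 0" using M m0 by (simp add: C_def)
    have key: "s * (L1_pair v \<xi> - v0 \<xi>) \<ge> 0" if s: "s = 1 \<or> s = -1" for s :: real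
    proof -
      define \<eta> where "\<eta> = (\<lambda>x. C * \<rho> x + s * \<xi> x)"
      have H\<eta>: "H1per \<eta>" unfolding \<eta>_def by (rule H1per_lin[OF H\<rho> H\<xi>])
      have \<eta>0: "\<forall>x\<in>Iper. \<eta> x \<ge> 0"
      proof
        fix x assume x: "x \<in> Iper"
        have "C * m \<le> C * \<rho> x" using mle x C0 by (simp add: mult_left_mono)
        moreover have "C * m = M" using m0 by (simp add: C_def)
        moreover have "\<bar>s * \<xi> x\<bar> \<le> M" using M x s by (auto simp: abs_mult)
        ultimately show "\<eta> x \<ge> 0" unfolding \<eta>_def by linarith
      qed
      have "L1_pair v \<eta> - v0 \<eta> \<ge> 0" using pos H\<eta> \<eta>0 by blast
      moreover have "L1_pair v \<eta> = C * L1_pair v \<rho> + s * L1_pair v \<xi>"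
        unfolding \<eta>_def by (rule L1_lin[OF v_L1 \<rho>c H1per_cont[OF H\<xi>]])
      moreover have "v0 \<eta> = C * v0 \<rho> + s * v0 \<xi>"
        unfolding \<eta>_def by (rule v0lin[OF H\<rho> H\<xi>])
      ultimately have "0 \<le> C * (L1_pair v \<rho> - v0 \<rho>) + s * (L1_pair v \<xi> - v0 \<xi>)"
        by (simp add: algebra_simps)
      moreover have "C * (L1_pair v \<rho> - v0 \<rho>) \<le> 0" using C0 W\<rho> by (simp add: mult_nonneg_nonpos)
      ultimately show ?thesis by linarith
    qed
    have "L1_pair v \<xi> - v0 \<xi> \<ge> 0" using key[of 1] by simp
    moreover have "- (L1_pair v \<xi> - v0 \<xi>) \<ge> 0" using key[of "-1"] by simp
    ultimately show "L1_pair v \<xi> = v0 \<xi>" by linarith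
  qed
qed

theorem lemma5p3:
  fixes c :: "real ^ 'n \<Rightarrow> ereal" and v :: "real \<Rightarrow> real"
  assumes c_cont: "continuous_on Icube c"
    and c_not_minf: "\<forall>x\<in>Icube. c x \<noteq> -\<infinity>"
    and v_L1: "set_integrable lborel Iper v"
    and c_ge: "AE x in lborel. x \<in> Icube \<longrightarrow> c x - ereal (\<Sum>j\<in>UNIV. v (x $ j)) \<ge> 0"
  shows "(\<forall>\<gamma> \<rho>\<gamma>. prob_on_cube \<gamma> \<and> continuous_on Iper \<rho>\<gamma>
            \<and> (\<forall>A\<in>sets borel. (\<Sum>j\<in>UNIV. measure \<gamma> {x\<in>space \<gamma>. x $ j \<in> A})
                                 = (LINT t:(A \<inter> Iper)|lborel. \<rho>\<gamma> t))
          \<longrightarrow> ereal_integral \<gamma> c - ereal (LINT t:Iper|lborel. \<rho>\<gamma> t * v t) \<ge> 0)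
       \<and> (\<forall>\<rho> v0. Dper \<rho> \<and> normalized_gen_kantorovich_potential c \<rho> v0
            \<and> (\<forall>\<xi>. H1per \<xi> \<and> (\<forall>x\<in>Iper. \<xi> x \<ge> 0) \<longrightarrow> L1_pair v \<xi> - v0 \<xi> \<ge> 0)
          \<longrightarrow> (\<forall>\<xi>. H1per \<xi> \<longrightarrow> L1_pair v \<xi> = v0 \<xi>))"
proof -
  have P1: "\<forall>\<gamma> \<rho>\<gamma>. prob_on_cube \<gamma> \<and> continuous_on Iper \<rho>\<gamma>
            \<and> (\<forall>A\<in>sets borel. (\<Sum>j\<in>UNIV. measure \<gamma> {x\<in>space \<gamma>. x $ j \<in> A})
                                 = (LINT t:(A \<inter> Iper)|lborel. \<rho>\<gamma> t))
          \<longrightarrow> ereal_integral \<gamma> c - ereal (LINT t:Iper|lborel. \<rho>\<gamma> t * v t) \<ge> 0"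
    using part1[OF c_cont c_not_minf v_L1 c_ge] by blast
  show ?thesis
    using P1 part2[OF P1 v_L1] by blast
qed



end
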